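(* Let $w:\{0,1\}^L\to\mathbb{R}_{\ge 0}$ be a generic fitness landscape inducing the standard staircase triangulation, and let $g,g'$ be genotypes with $g'\subset g$. For every pair of genotypes $\{h,h'\}$ with $X_{h,h'}=X_{g,g'}$ we have $w_g+w_{g'}\ge w_h+w_{h'}$, with equality only if $\{h,h'\}=\{g,g'\}$.
   Context: Genotypes $g\in\{0,1\}^L$ are identified with subsets $\{i:g_i=1\}$ of $\{1,\dots,L\}$ and with vertices of $[0,1]^L$. For genotypes $g,g'$, $X_{g,g'}\in[0,1]^L$ is defined by $X_{g,g'}(i)=\tfrac12(g_i+g'_i)$. The triangulation induced by $w$ is the regular subdivision of $[0,1]^L$ obtained by projecting the upper faces of $\mathrm{conv}\{(g,w_g)\}\subset\mathbb{R}^{L+1}$; $w$ is generic if all $w_g$ are distinct and this subdivision is a triangulation. The standard staircase triangulation consists of the $L!$ simplices $\{g_0\subset g_1\subset\cdots\subset g_L\}$ with $g_0=\emptyset$, $g_L=\{1,\dots,L\}$, $|g_k|=k$. *)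

theory Defs
  imports Complex_Main
begin

text \<open>Genotypes are subsets of {1..L}; the genotype g corresponds to the 0/1 vertex of
  the cube with g_i = 1 iff i in g.  Points of R^L are functions nat => real, only the
  coordinates 1..L being relevant.  For a 0/1 vertex g and a linear functional a,
  the value a . g is the sum of a i over i in g.\<close>

definition genotypes :: "nat \<Rightarrow> nat set set" where
  "genotypes L = Pow {1..L}"

definition Xpt :: "nat \<Rightarrow> nat set \<Rightarrow> nat set \<Rightarrow> nat \<Rightarrow> real" where
  "Xpt L g g' = (\<lambda>i. if i \<in> {1..L} then ((if i \<in> g then 1 else 0) + (if i \<in> g' then 1 else 0)) / 2 else 0)"

text \<open>Vertex sets of upper faces of conv{(g, w g)}: the lifted points lying on a
  non-vertical supporting hyperplane that lies above all lifted points.\<close>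
definition upper_face :: "nat \<Rightarrow> (nat set \<Rightarrow> real) \<Rightarrow> nat set set \<Rightarrow> bool" where
  "upper_face L w S \<longleftrightarrow> (\<exists>(a::nat \<Rightarrow> real) (c::real).
      (\<forall>g\<in>genotypes L. w g \<le> (\<Sum>i\<in>g. a i) + c) \<and>
      S = {g \<in> genotypes L. w g = (\<Sum>i\<in>g. a i) + c})"

text \<open>The affine hull of the vertices in S is all of R^L: the only affine function
  vanishing on S is zero.\<close>
definition full_dim :: "nat \<Rightarrow> nat set set \<Rightarrow> bool" where
  "full_dim L S \<longleftrightarrow> (\<forall>(a::nat \<Rightarrow> real) (c::real).
      (\<forall>g\<in>S. (\<Sum>i\<in>g. a i) + c = 0) \<longrightarrow> (\<forall>i\<in>{1..L}. a i = 0) \<and> c = 0)"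

definition aff_indep :: "nat \<Rightarrow> nat set set \<Rightarrow> bool" where
  "aff_indep L S \<longleftrightarrow> (\<forall>\<mu> :: nat set \<Rightarrow> real.
      (\<Sum>g\<in>S. \<mu> g) = 0 \<and> (\<forall>i\<in>{1..L}. (\<Sum>g\<in>S. (if i \<in> g then \<mu> g else 0)) = 0)
      \<longrightarrow> (\<forall>g\<in>S. \<mu> g = 0))"

text \<open>Maximal cells of the regular subdivision induced by w (projections of the
  full-dimensional upper faces), given by their vertex sets.\<close>
definition max_cells :: "nat \<Rightarrow> (nat set \<Rightarrow> real) \<Rightarrow> nat set set set" where
  "max_cells L w = {S. upper_face L w S \<and> full_dim L S}"

definition is_triangulation :: "nat \<Rightarrow> (nat set \<Rightarrow> real) \<Rightarrow> bool" where
  "is_triangulation L w \<longleftrightarrow> (\<forall>S. upper_face L w S \<longrightarrow> aff_indep L S)"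

definition generic :: "nat \<Rightarrow> (nat set \<Rightarrow> real) \<Rightarrow> bool" where
  "generic L w \<longleftrightarrow> inj_on w (genotypes L) \<and> is_triangulation L w"

definition staircase_simplex :: "nat \<Rightarrow> nat set set \<Rightarrow> bool" where
  "staircase_simplex L S \<longleftrightarrow> (\<exists>ch :: nat \<Rightarrow> nat set.
      (\<forall>k\<le>L. ch k \<subseteq> {1..L} \<and> card (ch k) = k) \<and>
      (\<forall>k<L. ch k \<subseteq> ch (Suc k)) \<and> S = ch ` {0..L})"

definition induces_staircase :: "nat \<Rightarrow> (nat set \<Rightarrow> real) \<Rightarrow> bool" where
  "induces_staircase L w \<longleftrightarrow> max_cells L w = {S. staircase_simplex L S}"

end

theory Submission
  imports Defs
begin

lemma chain_exists:
  assumes g: "g \<in> genotypes L" and g': "g' \<in> genotypes L" and sub: "g' \<subseteq> g"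
  shows "\<exists>S. staircase_simplex L S \<and> g \<in> S \<and> g' \<in> S"
proof -
  define xs1 where "xs1 = sorted_list_of_set g'"
  define xs2 where "xs2 = sorted_list_of_set (g - g')"
  define xs3 where "xs3 = sorted_list_of_set ({1..L} - g)"
  define xs where "xs = xs1 @ xs2 @ xs3"
  have gs: "g \<subseteq> {1..L}" "g' \<subseteq> {1..L}" using g g' by (auto simp: genotypes_def)
  have fin: "finite g" "finite g'" using gs finite_subset by blast+
  have s1: "set xs1 = g'" "distinct xs1" "length xs1 = card g'" using fin by (auto simp: xs1_def)
  have s2: "set xs2 = g - g'" "distinct xs2" using fin by (auto simp: xs2_def)
  have s3: "set xs3 = {1..L} - g" "distinct xs3" by (auto simp: xs3_def)
  have setxs: "set xs = {1..L}" using s1 s2 s3 gs sub by (auto simp: xs_def)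
  have dxs: "distinct xs" using s1 s2 s3 sub by (auto simp: xs_def)
  have lxs: "length xs = L" using setxs dxs distinct_card by fastforce
  have l12: "length (xs1 @ xs2) = card g"
  proof -
    have "set (xs1 @ xs2) = g" using s1 s2 sub by auto
    moreover have "distinct (xs1 @ xs2)" using dxs by (auto simp: xs_def)
    ultimately show ?thesis using distinct_card by fastforce
  qed
  define ch where "ch k = set (take k xs)" for k
  have "staircase_simplex L (ch ` {0..L})"
    unfolding staircase_simplex_def
  proof (intro exI conjI allI impI)
    fix k assume k: "k \<le> L"
    show "ch k \<subseteq> {1..L}" using setxs set_take_subset unfolding ch_def by metis
    show "card (ch k) = k" unfolding ch_def using dxs k lxs
      by (simp add: distinct_card)
  next
    fix k show "ch k \<subseteq> ch (Suc k)" unfolding ch_def by (simp add: set_take_subset_set_take)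
  qed simp
  moreover have "g' = ch (card g')" unfolding ch_def xs_def using s1 by simp
  moreover have "g = ch (card g)"
  proof -
    have "xs = (xs1 @ xs2) @ xs3" by (simp add: xs_def)
    then have "take (card g) xs = xs1 @ xs2" using l12 by (metis append_eq_conv_conj)
    moreover have "set (xs1 @ xs2) = g" using s1 s2 sub by auto
    ultimately show ?thesis unfolding ch_def by simp
  qed
  moreover have "card g \<le> L" "card g' \<le> L" 
    using card_mono[OF finite_atLeastAtMost gs(1)] card_mono[OF finite_atLeastAtMost gs(2)] by simp_all
  ultimately show ?thesis by force
qed

theorem mainTheorem9:
  fixes L :: nat and w :: "nat set \<Rightarrow> real" and g g' :: "nat set"
  assumes nonneg: "\<forall>x\<in>genotypes L. w x \<ge> 0"
    and gen: "generic L w"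
    and stair: "induces_staircase L w"
    and g: "g \<in> genotypes L" and g': "g' \<in> genotypes L"
    and sub: "g' \<subset> g"
  shows "\<forall>h\<in>genotypes L. \<forall>h'\<in>genotypes L. Xpt L h h' = Xpt L g g' \<longrightarrow>
           w h + w h' \<le> w g + w g' \<and>
           (w g + w g' = w h + w h' \<longrightarrow> {h, h'} = {g, g'})"
proof (intro ballI impI)
  fix h h' assume h: "h \<in> genotypes L" and h': "h' \<in> genotypes L"
    and X: "Xpt L h h' = Xpt L g g'"
  define ind where "ind x i = (if i \<in> x then 1 else (0::real))" for x :: "nat set" and i
  define del where "del y x = (if x = y then 1 else (0::real))" for y x :: "nat set"
  have coord: "ind h i + ind h' i = ind g i + ind g' i" if i: "i \<in> {1..L}" for i
  proof -
    have "Xpt L h h' i = Xpt L g g' i" using X by simp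
    then show ?thesis using i unfolding Xpt_def ind_def by (simp split: if_splits)
  qed
  obtain S where Sst: "staircase_simplex L S" and gS: "g \<in> S" and g'S: "g' \<in> S"
    using chain_exists[OF g g'] sub by blast
  have "S \<in> max_cells L w" using stair Sst unfolding induces_staircase_def by blast
  then have uf: "upper_face L w S" unfolding max_cells_def by blast
  then obtain a c where le: "\<forall>x\<in>genotypes L. w x \<le> (\<Sum>i\<in>x. a i) + c"
    and Sdef: "S = {x \<in> genotypes L. w x = (\<Sum>i\<in>x. a i) + c}"
    unfolding upper_face_def by blast
  have ai: "aff_indep L S" using gen uf unfolding generic_def is_triangulation_def by blast
  have sumrw: "(\<Sum>i\<in>x. a i) = (\<Sum>i\<in>{1..L}. ind x i * a i)" if "x \<in> genotypes L" for x
  proof -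
    have "x \<subseteq> {1..L}" using that by (auto simp: genotypes_def)
    then have "{1..L} \<inter> x = x" by blast
    then have "sum a x = sum a ({1..L} \<inter> x)" by simp
    also have "\<dots> = (\<Sum>i\<in>{1..L}. if i \<in> x then a i else 0)" by (simp add: sum.inter_restrict)
    also have "\<dots> = (\<Sum>i\<in>{1..L}. ind x i * a i)" by (intro sum.cong) (auto simp: ind_def)
    finally show ?thesis .
  qed
  have fsum: "(\<Sum>i\<in>h. a i) + (\<Sum>i\<in>h'. a i) = (\<Sum>i\<in>g. a i) + (\<Sum>i\<in>g'. a i)"
  proof -
    have "(\<Sum>i\<in>h. a i) + (\<Sum>i\<in>h'. a i) = (\<Sum>i\<in>{1..L}. (ind h i + ind h' i) * a i)"
      using sumrw[OF h] sumrw[OF h'] by (simp add: sum.distrib distrib_right)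
    also have "\<dots> = (\<Sum>i\<in>{1..L}. (ind g i + ind g' i) * a i)"
      using coord by (intro sum.cong) auto
    also have "\<dots> = (\<Sum>i\<in>g. a i) + (\<Sum>i\<in>g'. a i)"
      using sumrw[OF g] sumrw[OF g'] by (simp add: sum.distrib distrib_right)
    finally show ?thesis .
  qed
  have wg: "w g = (\<Sum>i\<in>g. a i) + c" and wg': "w g' = (\<Sum>i\<in>g'. a i) + c"
    using gS g'S Sdef by auto
  have wh: "w h \<le> (\<Sum>i\<in>h. a i) + c" and wh': "w h' \<le> (\<Sum>i\<in>h'. a i) + c"
    using le h h' by auto
  show "w h + w h' \<le> w g + w g' \<and> (w g + w g' = w h + w h' \<longrightarrow> {h, h'} = {g, g'})"
  proof (intro conjI impI)
    show "w h + w h' \<le> w g + w g'" using wg wg' wh wh' fsum by linarith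
  next
    assume eq: "w g + w g' = w h + w h'"
    have e1: "w h = (\<Sum>i\<in>h. a i) + c" using wg wg' wh wh' fsum eq by linarith
    have e2: "w h' = (\<Sum>i\<in>h'. a i) + c" using wg wg' wh wh' fsum eq by linarith
    have hS: "h \<in> S" unfolding Sdef using e1 h by blast
    have h'S: "h' \<in> S" unfolding Sdef using e2 h' by blast
    have finS: "finite S"
    proof -
      have "S \<subseteq> genotypes L" using Sdef by blast
      moreover have "finite (genotypes L)" by (simp add: genotypes_def)
      ultimately show ?thesis using finite_subset by blast
    qed
    define \<mu> where "\<mu> x = del g x + del g' x - del h x - del h' x" for x
    have dsum: "(\<Sum>x\<in>S. if P x then del y x else 0) = (if P y then 1 else 0)"
      if "y \<in> S" for y P
    proof -
      have "(\<Sum>x\<in>S. if P x then del y x else 0) = (\<Sum>x\<in>S. if x = y then (if P y then 1 else 0) else 0)"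
        by (intro sum.cong) (auto simp: del_def)
      also have "\<dots> = (if P y then 1 else 0)" using that finS by simp
      finally show ?thesis .
    qed
    have s0: "(\<Sum>x\<in>S. \<mu> x) = 0"
      using dsum[of g "\<lambda>_. True"] dsum[of g' "\<lambda>_. True"] dsum[of h "\<lambda>_. True"]
        dsum[of h' "\<lambda>_. True"] gS g'S hS h'S
      by (simp add: \<mu>_def sum.distrib sum_subtractf)
    have s1: "(\<Sum>x\<in>S. (if i \<in> x then \<mu> x else 0)) = 0" if i: "i \<in> {1..L}" for i
    proof -
      have e: "(if i \<in> x then \<mu> x else 0) = (if i \<in> x then del g x else 0)
          + (if i \<in> x then del g' x else 0) - (if i \<in> x then del h x else 0)
          - (if i \<in> x then del h' x else 0)" for x
        by (simp add: \<mu>_def)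
      show ?thesis
        using dsum[of g "\<lambda>x. i \<in> x"] dsum[of g' "\<lambda>x. i \<in> x"] dsum[of h "\<lambda>x. i \<in> x"]
          dsum[of h' "\<lambda>x. i \<in> x"] gS g'S hS h'S coord[OF i]
        by (simp add: e sum.distrib sum_subtractf ind_def)
    qed
    have "\<forall>x\<in>S. \<mu> x = 0" using ai s0 s1 unfolding aff_indep_def by blast
    then have "\<mu> g = 0" "\<mu> g' = 0" using gS g'S by auto
    moreover have "g \<noteq> g'" using sub by blast
    ultimately show "{h, h'} = {g, g'}"
      unfolding \<mu>_def del_def by (auto split: if_splits)
  qed
qed

end
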